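(* Let $x\in\Pi[N]$, $h=H(x)$, and for $\mu\in\{0,1\}$ and $l\in\mathbb Z$ let $y^{\mu}[l]=\langle x,\psi_{[1],\mu}[\cdot-2l]\rangle$, $c^{\mu}[l]=\langle x,\varphi_{[1],\mu}[\cdot-2l]\rangle$ (both $N/2$-periodic in $l$), and $z^{\mu}_{\pm}=y^{\mu}\mp i\,c^{\mu}$. For an $N/2$-periodic sequence $v$ write $\hat v[n]_1=\sum_{l=0}^{N/2-1}v[l]\,\omega^{-2ln}$. Then for every $n\in\{0,\dots,N/2-1\}$: (i) $\begin{pmatrix}\hat z^{0}_{\pm}[n]_1\\ \hat z^{1}_{\pm}[n]_1\end{pmatrix}=\tfrac12\,\overline{\tilde M^{q}_{\pm}[n]}\begin{pmatrix}\hat x[n]\\ \hat x[n+N/2]\end{pmatrix}$, where the bar denotes entrywise complex conjugation; (ii) $M^{q}_{\pm}[n]\begin{pmatrix}\hat z^{0}_{\pm}[n]_1\\ \hat z^{1}_{\pm}[n]_1\end{pmatrix}=2\begin{pmatrix}\hat x[n]\pm i\,\hat h[n]\\ \hat x[n+N/2]\pm i\,\hat h[n+N/2]\end{pmatrix}$. In particular, applying the analysis filter bank with modulation matrix $\tilde M^q_{\pm}$ followed by the synthesis filter bank with modulation matrix $M^q_{\pm}$ to $x$ yields $2(x\pm iH(x))$, twice the analytic signal of $x$.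
   Context: Let $N=2^{J}$ with $J\ge 1$ an integer and $\omega=e^{2\pi i/N}$. $\Pi[N]$ denotes the real vector space of real-valued $N$-periodic sequences $x=\{x[k]\}_{k\in\mathbb Z}$, with inner product $\langle x,y\rangle=\sum_{k=0}^{N-1}x[k]y[k]$. The DFT of an $N$-periodic sequence is $\hat x[n]=\sum_{k=0}^{N-1}x[k]\omega^{-kn}$, with inverse $x[k]=\frac1N\sum_{n=0}^{N-1}\hat x[n]\omega^{kn}$. For $x\in\Pi[N]$, its discrete periodic Hilbert transform $H(x)\in\Pi[N]$ has DFT $\widehat{H(x)}[n]=-i\hat x[n]$ for $0<n<N/2$, $=i\hat x[n]$ for $N/2<n<N$, and $=0$ for $n\in\{0,N/2\}$ (indices mod $N$). Fix an integer $r\ge1$; let $U[n]=\tfrac12\big(\cos^{4r}\tfrac{\pi n}{N}+\sin^{4r}\tfrac{\pi n}{N}\big)$, $\beta[n]=\cos^{2r}\tfrac{\pi n}{N}/\sqrt{U[n]}$, $\alpha[n]=\omega^{n}\sin^{2r}\tfrac{\pi n}{N}/\sqrt{U[n]}$. The first-level wavelet packets $\psi_{[1],0},\psi_{[1],1}\in\Pi[N]$ have DFTs $\hat\psi_{[1],0}=\beta$, $\hat\psi_{[1],1}=\alpha$; the complementary wavelet packets $\varphi_{[1],\mu}\in\Pi[N]$ have DFT $\hat\varphi_{[1],\mu}[n]=-i\hat\psi_{[1],\mu}[n]$ for $0<n<N/2$, $=i\hat\psi_{[1],\mu}[n]$ for $N/2<n<N$, $=\hat\psi_{[1],\mu}[n]$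 for $n\in\{0,N/2\}$. Write $\hat g^{\mu}=\hat\varphi_{[1],\mu}$. Modulation matrices: $\tilde M[n]=\begin{pmatrix}\beta[n]&\beta[n+N/2]\\ \alpha[n]&\alpha[n+N/2]\end{pmatrix}$, $M[n]=\tilde M[n]^{T}$; $\tilde M^{c}[n]=\begin{pmatrix}\hat g^{0}[n]&\hat g^{0}[n+N/2]\\ \hat g^{1}[n]&\hat g^{1}[n+N/2]\end{pmatrix}$, $M^{c}[n]=\tilde M^{c}[n]^{T}$; and $\tilde M^{q}_{\pm}[n]=\tilde M[n]\pm i\,\tilde M^{c}[n]$, $M^{q}_{\pm}[n]=M[n]\pm i\,M^{c}[n]$. *)

theory Defs
  imports "HOL-Analysis.Analysis"
begin

text \<open>Powers of omega = exp(2 pi i / N): om N m = omega^m, for integer m.\<close>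
definition om :: "nat \<Rightarrow> int \<Rightarrow> complex" where
  "om N m = cis (2 * pi * of_int m / real N)"

definition periodic_seq :: "nat \<Rightarrow> (int \<Rightarrow> real) \<Rightarrow> bool" where
  "periodic_seq N x \<longleftrightarrow> (\<forall>k. x (k + int N) = x k)"

definition dft :: "nat \<Rightarrow> (int \<Rightarrow> complex) \<Rightarrow> int \<Rightarrow> complex" where
  "dft N x n = (\<Sum>k=0..<int N. x k * om N (- k * n))"

definition idft :: "nat \<Rightarrow> (int \<Rightarrow> complex) \<Rightarrow> int \<Rightarrow> complex" where
  "idft N X k = (1 / of_nat N) * (\<Sum>n=0..<int N. X n * om N (k * n))"

definition inner_N :: "nat \<Rightarrow> (int \<Rightarrow> real) \<Rightarrow> (int \<Rightarrow> real) \<Rightarrow> real" where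
  "inner_N N x y = (\<Sum>k=0..<int N. x k * y k)"

definition hilb_mult :: "nat \<Rightarrow> int \<Rightarrow> complex" where
  "hilb_mult N n = (let m = n mod int N in
     if 0 < m \<and> m < int N div 2 then - \<i>
     else if int N div 2 < m then \<i> else 0)"

definition comp_mult :: "nat \<Rightarrow> int \<Rightarrow> complex" where
  "comp_mult N n = (let m = n mod int N in
     if 0 < m \<and> m < int N div 2 then - \<i>
     else if int N div 2 < m then \<i> else 1)"

text \<open>Discrete periodic Hilbert transform (its values are real; Re only fixes the type).\<close>
definition hilbert :: "nat \<Rightarrow> (int \<Rightarrow> real) \<Rightarrow> int \<Rightarrow> real" where
  "hilbert N x k = Re (idft N (\<lambda>n. hilb_mult N n * dft N (\<lambda>j. of_real (x j)) n) k)"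

definition U :: "nat \<Rightarrow> nat \<Rightarrow> int \<Rightarrow> real" where
  "U N r n = (cos (pi * of_int n / real N) ^ (4 * r) + sin (pi * of_int n / real N) ^ (4 * r)) / 2"

definition beta :: "nat \<Rightarrow> nat \<Rightarrow> int \<Rightarrow> complex" where
  "beta N r n = of_real (cos (pi * of_int n / real N) ^ (2 * r) / sqrt (U N r n))"

definition alpha :: "nat \<Rightarrow> nat \<Rightarrow> int \<Rightarrow> complex" where
  "alpha N r n = om N n * of_real (sin (pi * of_int n / real N) ^ (2 * r) / sqrt (U N r n))"

definition psi_hat :: "nat \<Rightarrow> nat \<Rightarrow> nat \<Rightarrow> int \<Rightarrow> complex" where
  "psi_hat N r \<mu> n = (if \<mu> = 0 then beta N r n else alpha N r n)"

definition g_hat :: "nat \<Rightarrow> nat \<Rightarrow> nat \<Rightarrow> int \<Rightarrow> complex" where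
  "g_hat N r \<mu> n = comp_mult N n * psi_hat N r \<mu> n"

text \<open>The wavelet packets themselves (real sequences; Re only fixes the type).\<close>
definition psi :: "nat \<Rightarrow> nat \<Rightarrow> nat \<Rightarrow> int \<Rightarrow> real" where
  "psi N r \<mu> k = Re (idft N (psi_hat N r \<mu>) k)"

definition phi :: "nat \<Rightarrow> nat \<Rightarrow> nat \<Rightarrow> int \<Rightarrow> real" where
  "phi N r \<mu> k = Re (idft N (g_hat N r \<mu>) k)"

text \<open>Modulation matrices, entries indexed by i,j in {0,1}:
  Mt N r n i j = tilde M[n]_(i,j), Mtc = tilde M^c, Mq s = tilde M^q_{+/-} for s = +1/-1,
  and the untilded matrices are transposes.\<close>
definition Mt :: "nat \<Rightarrow> nat \<Rightarrow> int \<Rightarrow> nat \<Rightarrow> nat \<Rightarrow> complex" where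
  "Mt N r n i j = psi_hat N r i (n + int j * (int N div 2))"

definition Mtc :: "nat \<Rightarrow> nat \<Rightarrow> int \<Rightarrow> nat \<Rightarrow> nat \<Rightarrow> complex" where
  "Mtc N r n i j = g_hat N r i (n + int j * (int N div 2))"

definition Mtq :: "nat \<Rightarrow> nat \<Rightarrow> real \<Rightarrow> int \<Rightarrow> nat \<Rightarrow> nat \<Rightarrow> complex" where
  "Mtq N r s n i j = Mt N r n i j + of_real s * \<i> * Mtc N r n i j"

definition Mq :: "nat \<Rightarrow> nat \<Rightarrow> real \<Rightarrow> int \<Rightarrow> nat \<Rightarrow> nat \<Rightarrow> complex" where
  "Mq N r s n i j = Mtq N r s n j i"

text \<open>Coefficients y^mu[l], c^mu[l] and z^mu_{+/-} = y^mu -/+ i c^mu (sign s = +1/-1).\<close>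
definition ycoef :: "nat \<Rightarrow> nat \<Rightarrow> (int \<Rightarrow> real) \<Rightarrow> nat \<Rightarrow> int \<Rightarrow> real" where
  "ycoef N r x \<mu> l = inner_N N x (\<lambda>k. psi N r \<mu> (k - 2 * l))"

definition ccoef :: "nat \<Rightarrow> nat \<Rightarrow> (int \<Rightarrow> real) \<Rightarrow> nat \<Rightarrow> int \<Rightarrow> real" where
  "ccoef N r x \<mu> l = inner_N N x (\<lambda>k. phi N r \<mu> (k - 2 * l))"

definition zcoef :: "nat \<Rightarrow> nat \<Rightarrow> real \<Rightarrow> (int \<Rightarrow> real) \<Rightarrow> nat \<Rightarrow> int \<Rightarrow> complex" where
  "zcoef N r s x \<mu> l = of_real (ycoef N r x \<mu> l) - of_real s * \<i> * of_real (ccoef N r x \<mu> l)"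

definition dft1 :: "nat \<Rightarrow> (int \<Rightarrow> complex) \<Rightarrow> int \<Rightarrow> complex" where
  "dft1 N v n = (\<Sum>l=0..<int N div 2. v l * om N (- 2 * l * n))"

end

theory Submission
  imports Defs
begin

lemma om_add: "om P (a + b) = om P a * om P b"
  unfolding om_def by (simp add: cis_mult add_divide_distrib distrib_left)

lemma om_zero[simp]: "om P 0 = 1"
  unfolding om_def by simp

lemma om_cnj: "cnj (om P a) = om P (- a)"
  unfolding om_def by (simp add: cis_cnj)

lemma om_mult_P: "P > 0 \<Longrightarrow> om P (int P * k) = 1"
proof -
  assume "P > 0"
  then have "2 * pi * of_int (int P * k) / real P = 2 * pi * of_int k" by simp
  then show ?thesis unfolding om_def by simp
qed

lemma om_per: "P > 0 \<Longrightarrow> om P (a + int P * k) = om P a"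
  by (simp add: om_add om_mult_P)

lemma om_half: "M > 0 \<Longrightarrow> om (2*M) (int M) = -1"
  unfolding om_def by simp

lemma om_scale: "om (2*M) (2*a) = om M a"
  unfolding om_def by (simp add: field_simps)

lemma om_norm[simp]: "cmod (om P a) = 1"
  unfolding om_def by simp

lemma om_pow: "om P d ^ k = om P (int k * d)"
  by (induct k) (simp_all add: om_add distrib_right)

lemma om_eq_1: "P > 0 \<Longrightarrow> om P d = 1 \<Longrightarrow> int P dvd d"
proof -
  assume P: "P > 0" and h: "om P d = 1"
  then have "exp (\<i> * complex_of_real (2 * pi * of_int d / real P)) = 1"
    unfolding om_def by (simp add: cis_conv_exp)
  then obtain n :: int where "2 * pi * of_int d / real P = of_int (2*n) * pi"
    by (auto simp: exp_eq_1)
  then have "of_int d = real P * of_int n" using P by (simp add: field_simps)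
  then have "d = int P * n" by (metis of_int_eq_iff of_int_mult of_int_of_nat_eq)
  then show ?thesis by simp
qed

lemma sum_int_nat: "(\<Sum>k=0..<int P. f k) = (\<Sum>k<P. f (int k))"
proof -
  have "{0..<int P} = int ` {0..<P}" by (simp add: image_int_atLeastLessThan)
  then show ?thesis by (simp add: sum.reindex lessThan_atLeast0)
qed

lemma orth: assumes P: "P > 0"
  shows "(\<Sum>k=0..<int P. om P (k * d)) = (if int P dvd d then of_nat P else 0)"
proof (cases "int P dvd d")
  case True
  then obtain q where d: "d = int P * q" by auto
  have "(\<Sum>k=0..<int P. om P (k * d)) = (\<Sum>k=0..<int P. 1)"
    by (rule sum.cong) (auto simp: d om_mult_P[OF P] mult.left_commute[of _ "int P"])
  then show ?thesis using True by simp
next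
  case False
  have ne: "om P d \<noteq> 1" using om_eq_1[OF P] False by blast
  have "(\<Sum>k=0..<int P. om P (k * d)) = (\<Sum>k<P. om P d ^ k)"
    by (simp add: sum_int_nat om_pow)
  also have "\<dots> = (1 - om P d ^ P) / (1 - om P d)" using ne by (simp add: sum_gp_strict)
  also have "om P d ^ P = 1" by (simp add: om_pow om_mult_P[OF P])
  finally show ?thesis using False by simp
qed

definition per :: "nat \<Rightarrow> (int \<Rightarrow> 'a) \<Rightarrow> bool" where
  "per P F \<longleftrightarrow> (\<forall>n. F (n + int P) = F n)"

lemma per_mult: assumes "per P F" shows "F (n + int P * m) = F n"
proof (induct m arbitrary: n rule: int_induct[where k=0])
  case base then show ?case by simp
next
  case (step1 i) then show ?case using assms unfolding per_def
    by (metis add.assoc distrib_left mult.right_neutral)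
next
  case (step2 i)
  have "F (n + int P * (i - 1)) = F (n + int P * (i - 1) + int P)" using assms unfolding per_def by simp
  also have "\<dots> = F (n + int P * i)" by (simp add: algebra_simps)
  finally show ?case using step2 by simp
qed

lemma per_mod: assumes "per P F" shows "F n = F (n mod int P)"
proof -
  have "n = n mod int P + int P * (n div int P)" by simp
  then show ?thesis using per_mult[OF assms, of "n mod int P" "n div int P"] by metis
qed

lemma sum_shift: assumes "per P F" "P > 0"
  shows "(\<Sum>n=0..<int P. F (n + a)) = (\<Sum>n=0..<int P. F n)"
proof (rule sum.reindex_bij_witness[where i = "\<lambda>n. (n - a) mod int P" and j = "\<lambda>n. (n + a) mod int P"])
  fix n assume n: "n \<in> {0..<int P}"
  show "((n + a) mod int P - a) mod int P = n" using n by (simp add: mod_diff_left_eq)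
  show "(n + a) mod int P \<in> {0..<int P}" using assms(2) by simp
  show "F ((n + a) mod int P) = F (n + a)" using per_mod[OF assms(1)] by metis
next
  fix n assume n: "n \<in> {0..<int P}"
  show "((n - a) mod int P + a) mod int P = n" using n by (simp add: mod_add_left_eq)
  show "(n - a) mod int P \<in> {0..<int P}" using assms(2) by simp
qed

lemma sum_reflect: assumes "per P F" "P > 0"
  shows "(\<Sum>n=0..<int P. F (a - n)) = (\<Sum>n=0..<int P. F n)"
proof (rule sum.reindex_bij_witness[where i = "\<lambda>n. (a - n) mod int P" and j = "\<lambda>n. (a - n) mod int P"])
  fix n assume n: "n \<in> {0..<int P}"
  show "(a - (a - n) mod int P) mod int P = n" using n by (simp add: mod_diff_right_eq)
  show "(a - n) mod int P \<in> {0..<int P}" using assms(2) by simp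
  show "F ((a - n) mod int P) = F (a - n)" using per_mod[OF assms(1)] by metis
next
  fix n assume n: "n \<in> {0..<int P}"
  show "(a - (a - n) mod int P) mod int P = n" using n by (simp add: mod_diff_right_eq)
  show "(a - n) mod int P \<in> {0..<int P}" using assms(2) by simp
qed

definition herm :: "(int \<Rightarrow> complex) \<Rightarrow> bool" where
  "herm F \<longleftrightarrow> (\<forall>n. F (- n) = cnj (F n))"

lemma real_of_cnj: "cnj z = z \<Longrightarrow> complex_of_real (Re z) = z"
  by (simp add: complex_eq_iff)

lemma om_per_mul: "P > 0 \<Longrightarrow> om P (j * (n + int P)) = om P (j * n)"
proof -
  assume P: "P > 0"
  have "j * (n + int P) = j * n + int P * j" by (simp add: algebra_simps)
  then show ?thesis by (simp add: om_per[OF P])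
qed

lemma real_idft: assumes "per N F" "herm F" "N > 0"
  shows "complex_of_real (Re (idft N F j)) = idft N F j"
proof (rule real_of_cnj)
  define H where "H n = F n * om N (j * n)" for n
  have pH: "per N H" using assms(1) unfolding per_def H_def by (simp add: om_per_mul[OF assms(3)])
  have "cnj (idft N F j) = (1 / of_nat N) * (\<Sum>n=0..<int N. H (0 - n))"
    unfolding idft_def H_def using assms(2) unfolding herm_def
    by (simp add: om_cnj)
  also have "\<dots> = idft N F j" unfolding idft_def H_def
    using sum_reflect[OF pH assms(3), of 0] unfolding H_def by simp
  finally show "cnj (idft N F j) = idft N F j" .
qed

lemma per_dft: "N > 0 \<Longrightarrow> per N (dft N y)"
  unfolding per_def dft_def
proof (intro allI sum.cong refl)
  fix n k assume "N > 0"
  have "- k * (n + int N) = - k * n + int N * (- k)" by (simp add: algebra_simps)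
  then show "y k * om N (- k * (n + int N)) = y k * om N (- k * n)"
    by (simp only: om_per[OF \<open>N > 0\<close>])
qed

lemma herm_dft_real: "herm (dft N (\<lambda>k. complex_of_real (y k)))"
  unfolding herm_def dft_def by (simp add: om_cnj)

lemma sum_dvd_half: assumes "N = 2*M" "M > 0"
  shows "(\<Sum>n=0..<int N. (if int M dvd n then g n else 0)) = g 0 + g (int M)"
proof -
  have "(\<Sum>n=0..<int N. (if int M dvd n then g n else 0)) = (\<Sum>n\<in>{0, int M}. (if int M dvd n then g n else 0))"
  proof (rule sum.mono_neutral_right)
    show "finite {0..<int N}" by simp
    show "{0, int M} \<subseteq> {0..<int N}" using assms by auto
    show "\<forall>i\<in>{0..<int N} - {0, int M}. (if int M dvd i then g i else 0) = 0"
    proof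
      fix i assume i: "i \<in> {0..<int N} - {0, int M}"
      show "(if int M dvd i then g i else 0) = 0"
      proof (cases "int M dvd i")
        case True
        then obtain q where q: "i = int M * q" by auto
        have "0 \<le> int M * q" "int M * q < int M * 2" using i q assms by auto
        then have "0 \<le> q" "q < 2" using assms
          by (auto simp: zero_le_mult_iff mult_less_cancel_left)
        then have "q = 0 \<or> q = 1" by auto
        then show ?thesis using i q by auto
      qed simp
    qed
  qed
  also have "\<dots> = g 0 + g (int M)" using assms by simp
  finally show ?thesis .
qed

lemma sum_dvd_full: assumes "N > 0"
  shows "(\<Sum>n=0..<int N. (if int N dvd n then g n else 0)) = g 0"
proof -
  have "(\<Sum>n=0..<int N. (if int N dvd n then g n else 0)) = (\<Sum>n=0..<int N. (if n = 0 then g n else 0))"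
  proof (rule sum.cong)
    fix n assume n: "n \<in> {0..<int N}"
    have "int N dvd n \<longleftrightarrow> n = 0"
    proof
      assume "int N dvd n"
      then obtain q where q: "n = int N * q" by auto
      have "0 \<le> int N * q" "int N * q < int N * 1" using n q by auto
      then have "0 \<le> q" "q < 1" using assms
        by (auto simp: zero_le_mult_iff mult_less_cancel_left)
      then show "n = 0" using q by auto
    qed simp
    then show "(if int N dvd n then g n else 0) = (if n = 0 then g n else 0)" by simp
  qed simp
  also have "\<dots> = g 0" using assms by simp
  finally show ?thesis .
qed

lemma dft_idft: assumes "per N Y" "herm Y" "N > 0"
  shows "dft N (\<lambda>k. complex_of_real (Re (idft N Y k))) m = Y m"
proof -
  have "dft N (\<lambda>k. complex_of_real (Re (idft N Y k))) m = (\<Sum>k=0..<int N. idft N Y k * om N (- k * m))"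
    unfolding dft_def using real_idft[OF assms] by simp
  also have "\<dots> = (1 / of_nat N) * (\<Sum>k=0..<int N. \<Sum>j=0..<int N. Y j * om N (k * (j - m)))"
    unfolding idft_def by (simp add: sum_distrib_left sum_distrib_right mult_ac om_add[symmetric] algebra_simps)
  also have "\<dots> = (1 / of_nat N) * (\<Sum>j=0..<int N. Y j * (\<Sum>k=0..<int N. om N (k * (j - m))))"
    by (subst sum.swap) (simp add: sum_distrib_left)
  also have "\<dots> = (\<Sum>j=0..<int N. (if int N dvd (j - m) then Y j else 0))"
    using assms(3) by (simp add: orth sum_distrib_left if_distrib cong: if_cong)
  also have "\<dots> = (\<Sum>j=0..<int N. (\<lambda>j. if int N dvd (j - m) then Y j else 0) (j + m))"
  proof (rule sum_shift[symmetric])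
    show "per N (\<lambda>j. if int N dvd (j - m) then Y j else 0)" unfolding per_def
    proof
      fix n
      have e: "n + int N - m = (n - m) + 1 * int N" by simp
      show "(if int N dvd (n + int N - m) then Y (n + int N) else 0) = (if int N dvd (n - m) then Y n else 0)"
        using assms(1) unfolding per_def by (simp only: e dvd_add_times_triv_right_iff)
    qed
  qed (use assms in auto)
  also have "\<dots> = (\<Sum>j=0..<int N. (if int N dvd j then Y (j + m) else 0))" by simp
  also have "\<dots> = Y m" using sum_dvd_full[OF assms(3), of "\<lambda>j. Y (j + m)"] by simp 
  finally show ?thesis by simp
qed

lemma coef: fixes x :: "int \<Rightarrow> real"
  assumes pF: "per N F" and hF: "herm F" and NM: "N = 2*M" and M: "M > 0"
  defines "X \<equiv> dft N (\<lambda>k. complex_of_real (x k))"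
  shows "dft1 N (\<lambda>l. complex_of_real (inner_N N x (\<lambda>k. Re (idft N F (k - 2*l))))) n
     = (1/2) * (cnj (F n) * X n + cnj (F (n + int M)) * X (n + int M))"
proof -
  have N: "N > 0" using NM M by simp
  define W where "W m = F m * X (- m)" for m
  have pX: "per N X" unfolding X_def by (rule per_dft[OF N])
  have pW: "per N W" using pF pX unfolding per_def W_def
    by (metis add.commute add.inverse_inverse add_diff_cancel_left' diff_add_cancel minus_diff_eq)
  have s1: "complex_of_real (inner_N N x (\<lambda>k. Re (idft N F (k - 2*l))))
      = (1 / of_nat N) * (\<Sum>m=0..<int N. W m * om N (-2*l*m))" for l
  proof -
    have e: "om N ((k - 2*l)*m) = om N (-2*l*m) * om N (- k * - m)" for k m
    proof -
      have "(k - 2*l)*m = -2*l*m + (- k * - m)" by (simp add: algebra_simps)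
      then show ?thesis by (simp only: om_add)
    qed
    have "complex_of_real (inner_N N x (\<lambda>k. Re (idft N F (k - 2*l))))
        = (\<Sum>k=0..<int N. complex_of_real (x k) * idft N F (k - 2*l))"
      unfolding inner_N_def using real_idft[OF pF hF N] by simp
    also have "\<dots> = (1 / of_nat N) * (\<Sum>k=0..<int N. \<Sum>m=0..<int N. F m * om N (-2*l*m) * (complex_of_real (x k) * om N (- k * - m)))"
      unfolding idft_def e by (simp add: sum_distrib_left mult_ac)
    also have "\<dots> = (1 / of_nat N) * (\<Sum>m=0..<int N. F m * om N (-2*l*m) * X (- m))"
      unfolding X_def dft_def by (subst sum.swap) (simp add: sum_distrib_left)
    finally show ?thesis unfolding W_def by (simp add: mult_ac)
  qed
  have s3: "(\<Sum>l=0..<int M. om N (-2*l*(m + n))) = (if int M dvd (m + n) then of_nat M else 0)" for m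
  proof -
    have "om N (-2*l*(m + n)) = om M (l * (- (m + n)))" for l
      using om_scale[of M "l * (- (m + n))"] NM by (simp add: algebra_simps)
    moreover have "int M dvd - m - n \<longleftrightarrow> int M dvd m + n" using dvd_minus_iff[of "int M" "m+n"] by simp
    ultimately show ?thesis using orth[OF M, of "- (m + n)"] by simp
  qed
  have "dft1 N (\<lambda>l. complex_of_real (inner_N N x (\<lambda>k. Re (idft N F (k - 2*l))))) n
      = (\<Sum>l=0..<int M. (1 / of_nat N) * (\<Sum>m=0..<int N. W m * om N (-2*l*(m + n))))"
  proof -
    have hd: "int N div 2 = int M" using NM by simp
    have e2: "om N (-2*l*(m + n)) = om N (-2*l*m) * om N (-2*l*n)" for l m
    proof -
      have "-2*l*(m + n) = -2*l*m + -2*l*n" by (simp add: algebra_simps)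
      then show ?thesis by (simp only: om_add)
    qed
    show ?thesis unfolding dft1_def s1 hd e2 by (intro sum.cong refl) (simp add: sum_distrib_left sum_divide_distrib mult_ac)
  qed
  also have "\<dots> = (1 / of_nat N) * (\<Sum>m=0..<int N. W m * (\<Sum>l=0..<int M. om N (-2*l*(m + n))))"
    unfolding sum_distrib_left by (rule sum.swap)
  also have "\<dots> = (1/2) * (\<Sum>m=0..<int N. (if int M dvd (m + n) then W m else 0))"
    unfolding s3 using NM M by (simp add: sum_distrib_left if_distrib cong: if_cong)
  also have "(\<Sum>m=0..<int N. (if int M dvd (m + n) then W m else 0))
      = (\<Sum>m=0..<int N. (\<lambda>m. if int M dvd (m + n) then W m else 0) (m + - n))"
  proof (rule sum_shift[symmetric])
    show "per N (\<lambda>m. if int M dvd (m + n) then W m else 0)" unfolding per_def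
    proof
      fix m
      have e: "m + int N + n = (m + n) + 2 * int M" using NM by simp
      show "(if int M dvd (m + int N + n) then W (m + int N) else 0) = (if int M dvd (m + n) then W m else 0)"
        using pW unfolding per_def by (simp only: e dvd_add_times_triv_right_iff)
    qed
  qed (rule N)
  also have "\<dots> = (\<Sum>m=0..<int N. (if int M dvd m then W (m - n) else 0))" by (simp only: diff_conv_add_uminus add.assoc add.left_inverse add_0_right)
  also have "\<dots> = W (- n) + W (int M - n)"
    using sum_dvd_half[OF NM M, of "\<lambda>m. W (m - n)"] by simp
  also have "W (- n) = cnj (F n) * X n" using hF unfolding W_def herm_def by simp
  also have "W (int M - n) = cnj (F (n + int M)) * X (n + int M)"
  proof -
    have "F (int M - n) = cnj (F (n - int M))" using hF unfolding herm_def by (metis minus_diff_eq)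
    also have "F (n - int M) = F (n - int M + int N)" using pF unfolding per_def by simp
    also have "n - int M + int N = n + int M" using NM by simp
    finally have 1: "F (int M - n) = cnj (F (n + int M))" .
    have "X (- (int M - n)) = X (n - int M + int N)" using pX unfolding per_def by simp
    also have "n - int M + int N = n + int M" using NM by simp
    finally show ?thesis unfolding W_def 1 by simp
  qed
  finally show ?thesis .
qed

lemma arg_shift: "N = 2*M \<Longrightarrow> M > 0 \<Longrightarrow> pi * of_int (n + int M) / real N = pi * of_int n / real N + pi/2"
  by (simp add: field_simps)

lemma arg_shiftN: "N > 0 \<Longrightarrow> pi * of_int (n + int N) / real N = pi * of_int n / real N + pi"
  by (simp add: field_simps)

lemma pm4: "(- a :: 'a::ring_1) ^ (4*r) = a ^ (4*r)"
  by simp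

lemma pm2: "(- a :: 'a::ring_1) ^ (2*r) = a ^ (2*r)" by simp

lemma U_pos: "U N r n > 0"
proof -
  let ?c = "cos (pi * of_int n / real N)" and ?s = "sin (pi * of_int n / real N)"
  have "?c \<noteq> 0 \<or> ?s \<noteq> 0"
  proof (rule ccontr)
    assume "\<not> (?c \<noteq> 0 \<or> ?s \<noteq> 0)"
    then have "?s^2 + ?c^2 = 0" by simp
    then show False using sin_cos_squared_add[of "pi * of_int n / real N"] by simp
  qed
  moreover have "?c ^ (4*r) \<ge> 0" "?s ^ (4*r) \<ge> 0" by (simp_all add: zero_le_power_eq)
  moreover have "x \<noteq> 0 \<Longrightarrow> x ^ (4*r) > 0" for x :: real by (simp add: zero_less_power_eq)
  ultimately have "?c ^ (4*r) + ?s ^ (4*r) > 0" by (metis add_pos_nonneg add_nonneg_pos)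
  then show ?thesis unfolding U_def by simp
qed

lemma U_shift: "N = 2*M \<Longrightarrow> M > 0 \<Longrightarrow> U N r (n + int M) = U N r n"
  unfolding U_def arg_shift by (simp add: cos_add sin_add pm4 pm2 add.commute)

context
  fixes N M r :: nat
  assumes NM: "N = 2*M" and M: "M > 0"
begin

lemma Npos: "N > 0" using NM M by simp

lemma beta_per: "per N (beta N r)"
  unfolding per_def beta_def U_def arg_shiftN[OF Npos]
  by (simp add: pm4 pm2)

lemma beta_herm: "herm (beta N r)"
  unfolding herm_def beta_def U_def
  by (simp add: pm4 pm2)

lemma alpha_per: "per N (alpha N r)"
  unfolding per_def alpha_def U_def arg_shiftN[OF Npos]
  using om_per[OF Npos, of _ 1]
  by (simp add: pm4 pm2)

lemma alpha_herm: "herm (alpha N r)"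
  unfolding herm_def alpha_def U_def
  by (simp add: pm4 pm2 om_cnj)

end

context
  fixes N M r :: nat
  assumes NM: "N = 2*M" and M: "M > 0"
begin

lemma hd: "int N div 2 = int M" using NM by simp

lemma psi_hat_per: "per N (psi_hat N r \<mu>)"
  using beta_per[OF NM M] alpha_per[OF NM M] unfolding psi_hat_def per_def by simp

lemma psi_hat_herm: "herm (psi_hat N r \<mu>)"
  using beta_herm[OF NM M] alpha_herm[OF NM M] unfolding psi_hat_def herm_def by simp

lemma comp_per: "per N (comp_mult N)"
  unfolding per_def comp_mult_def by simp

lemma hilb_per: "per N (hilb_mult N)"
  unfolding per_def hilb_mult_def by simp

lemma comp_herm: "herm (comp_mult N)"
  unfolding herm_def
proof
  fix n
  have b: "0 \<le> n mod int N" "n mod int N < int N" using Npos[OF NM M] by auto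
  show "comp_mult N (- n) = cnj (comp_mult N n)"
    unfolding comp_mult_def Let_def hd zmod_zminus1_eq_if using b NM by auto
qed

lemma hilb_herm: "herm (hilb_mult N)"
  unfolding herm_def
proof
  fix n
  have b: "0 \<le> n mod int N" "n mod int N < int N" using Npos[OF NM M] by auto
  show "hilb_mult N (- n) = cnj (hilb_mult N n)"
    unfolding hilb_mult_def Let_def hd zmod_zminus1_eq_if using b NM by auto
qed

lemma g_hat_per: "per N (g_hat N r \<mu>)"
  using comp_per psi_hat_per unfolding g_hat_def per_def by simp

lemma g_hat_herm: "herm (g_hat N r \<mu>)"
  using comp_herm psi_hat_herm unfolding g_hat_def herm_def by simp

lemma mult_id: assumes "s = 1 \<or> s = -1"
  shows "(1 + complex_of_real s * \<i> * comp_mult N n) * (1 - complex_of_real s * \<i> * cnj (comp_mult N n))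
     = 2 * (1 + complex_of_real s * \<i> * hilb_mult N n)"
  using assms unfolding comp_mult_def hilb_mult_def Let_def
  by (auto simp: algebra_simps)

lemma om_cnj_mult: "om N n * cnj (om N n) = 1"
  by (simp add: om_cnj om_add[symmetric])

lemma om_shift: "om N (n + int M) = - om N n"
  using om_half[OF M] NM by (simp add: om_add)

lemma ortho: "beta N r n * cnj (beta N r n) + alpha N r n * cnj (alpha N r n) = 2"
    "beta N r n * cnj (beta N r (n + int M)) + alpha N r n * cnj (alpha N r (n + int M)) = 0"
proof -
  define c where "c = cos (pi * of_int n / real N)"
  define s where "s = sin (pi * of_int n / real N)"
  define u where "u = U N r n"
  have u: "u > 0" unfolding u_def by (rule U_pos)
  have uu: "(c^(2*r))^2 + (s^(2*r))^2 = 2 * u" unfolding u_def U_def c_def s_def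
    by (simp add: power_mult[symmetric] mult_ac)
  have sq: "sqrt u * sqrt u = u" using u by simp
  have b0: "beta N r n = of_real (c^(2*r) / sqrt u)" unfolding beta_def c_def u_def by simp
  have a0: "alpha N r n = om N n * of_real (s^(2*r) / sqrt u)" unfolding alpha_def s_def u_def by simp
  have b1: "beta N r (n + int M) = of_real (s^(2*r) / sqrt u)"
    unfolding beta_def s_def u_def U_shift[OF NM M] arg_shift[OF NM M] by (simp add: cos_add pm2)
  have a1: "alpha N r (n + int M) = - om N n * of_real (c^(2*r) / sqrt u)"
    unfolding alpha_def c_def u_def U_shift[OF NM M] arg_shift[OF NM M] om_shift by (simp add: sin_add)
  have w: "om N n * cnj (om N n) = 1" by (rule om_cnj_mult)
  have r1: "(x / sqrt u) * (x / sqrt u) = x^2 / u" for x using sq by (simp add: power2_eq_square)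
  have e1: "beta N r n * cnj (beta N r n) = of_real ((c^(2*r))^2 / u)"
    unfolding b0 by (simp only: complex_cnj_complex_of_real of_real_mult[symmetric] r1)
  have e2: "alpha N r n * cnj (alpha N r n) = of_real ((s^(2*r))^2 / u)"
  proof -
    have "alpha N r n * cnj (alpha N r n) = (om N n * cnj (om N n)) * of_real ((s^(2*r) / sqrt u) * (s^(2*r) / sqrt u))"
      unfolding a0 by (simp only: complex_cnj_mult complex_cnj_complex_of_real of_real_mult mult_ac)
    then show ?thesis unfolding w r1 by simp
  qed
  have "beta N r n * cnj (beta N r n) + alpha N r n * cnj (alpha N r n) = of_real ((c^(2*r))^2 / u + (s^(2*r))^2 / u)"
    unfolding e1 e2 by simp
  also have "\<dots> = 2" using uu u by (simp add: add_divide_distrib[symmetric])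
  finally show "beta N r n * cnj (beta N r n) + alpha N r n * cnj (alpha N r n) = 2" .
  have f1: "beta N r n * cnj (beta N r (n + int M)) = of_real (c^(2*r)/sqrt u * (s^(2*r)/sqrt u))"
    unfolding b0 b1 by (simp only: complex_cnj_complex_of_real of_real_mult)
  have f2: "alpha N r n * cnj (alpha N r (n + int M)) = - ((om N n * cnj (om N n)) * of_real (c^(2*r)/sqrt u * (s^(2*r)/sqrt u)))"
    unfolding a0 a1 by (simp only: complex_cnj_mult complex_cnj_minus complex_cnj_complex_of_real of_real_mult mult_minus_right mult_minus_left mult_ac)
  have "beta N r n * cnj (beta N r (n + int M)) + alpha N r n * cnj (alpha N r (n + int M)) = 0"
    unfolding f1 f2 w by simp
  then show "beta N r n * cnj (beta N r (n + int M)) + alpha N r n * cnj (alpha N r (n + int M)) = 0" .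
qed

end

lemma alg: fixes p0 p1 q0 q1 A B X0 X1 H :: complex
  assumes "p0*cnj p0 + q0*cnj q0 = 2" "p0*cnj p1 + q0*cnj q1 = 0" "A * cnj A = 2*H"
  shows "(A*p0) * ((1/2)*(cnj(A*p0)*X0 + cnj(B*p1)*X1)) + (A*q0)*((1/2)*(cnj(A*q0)*X0 + cnj(B*q1)*X1)) = 2*(H*X0)"
proof -
  have "(A*p0) * ((1/2)*(cnj(A*p0)*X0 + cnj(B*p1)*X1)) + (A*q0)*((1/2)*(cnj(A*q0)*X0 + cnj(B*q1)*X1))
     = (1/2)*(A*cnj A)*X0*(p0*cnj p0 + q0*cnj q0) + (1/2)*A*cnj B*X1*(p0*cnj p1 + q0*cnj q1)"
    by (simp add: field_simps)
  also have "\<dots> = 2*(H*X0)" unfolding assms by simp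
  finally show ?thesis .
qed

theorem proposition4p2:
  fixes J r N :: nat and x :: "int \<Rightarrow> real" and s :: real
  assumes "J \<ge> 1" and "r \<ge> 1" and "N = 2 ^ J"
    and "periodic_seq N x"
    and "s = 1 \<or> s = -1"
  shows "\<forall>n \<in> {0..<int N div 2}.
     (let X = (\<lambda>j::nat. dft N (\<lambda>k. of_real (x k)) (n + int j * (int N div 2)));
          Hh = (\<lambda>j::nat. dft N (\<lambda>k. of_real (hilbert N x k)) (n + int j * (int N div 2)));
          Z = (\<lambda>\<mu>. dft1 N (zcoef N r s x \<mu>) n)
      in (\<forall>\<mu>\<in>{0,1}. Z \<mu> = (1/2) * (\<Sum>j\<in>{0,1}. cnj (Mtq N r s n \<mu> j) * X j))
       \<and> (\<forall>\<mu>\<in>{0,1}. (\<Sum>j\<in>{0,1}. Mq N r s n \<mu> j * Z j)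
                        = 2 * (X \<mu> + of_real s * \<i> * Hh \<mu>)))"
proof -
  define M :: nat where "M = 2 ^ (J - 1)"
  have NM: "N = 2 * M" unfolding M_def assms(3) using assms(1)
    by (metis One_nat_def Suc_pred less_eq_Suc_le power_Suc zero_less_Suc le_less_trans)
  have M: "M > 0" unfolding M_def by simp
  have N: "N > 0" using NM M by simp
  have hd: "int N div 2 = int M" using NM by simp
  define X where "X m = dft N (\<lambda>k. complex_of_real (x k)) m" for m
  have Mtq_eq: "Mtq N r s n \<mu> j = (1 + complex_of_real s * \<i> * comp_mult N (n + int j * int M)) * psi_hat N r \<mu> (n + int j * int M)" for n \<mu> j
    unfolding Mtq_def Mt_def Mtc_def g_hat_def hd by (simp add: algebra_simps)
  have Zeq: "dft1 N (zcoef N r s x \<mu>) n = (1/2)*(cnj (Mtq N r s n \<mu> 0) * X n + cnj (Mtq N r s n \<mu> 1) * X (n + int M))" for n \<mu>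
  proof -
    have lin: "dft1 N (zcoef N r s x \<mu>) n
        = dft1 N (\<lambda>l. complex_of_real (inner_N N x (\<lambda>k. Re (idft N (psi_hat N r \<mu>) (k - 2*l))))) n
          - complex_of_real s * \<i> * dft1 N (\<lambda>l. complex_of_real (inner_N N x (\<lambda>k. Re (idft N (g_hat N r \<mu>) (k - 2*l))))) n"
      unfolding dft1_def zcoef_def ycoef_def ccoef_def psi_def phi_def
      by (simp add: sum_subtractf sum_distrib_left algebra_simps)
    show ?thesis unfolding lin
      coef[OF psi_hat_per[OF NM M] psi_hat_herm[OF NM M] NM M]
      coef[OF g_hat_per[OF NM M] g_hat_herm[OF NM M] NM M]
      unfolding Mtq_def Mt_def Mtc_def hd X_def
      by (simp add: algebra_simps)
  qed
  have Hh: "dft N (\<lambda>k. complex_of_real (hilbert N x k)) m = hilb_mult N m * X m" for m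
  proof -
    have pY: "per N (\<lambda>n. hilb_mult N n * X n)"
      using hilb_per[OF NM M] per_dft[OF N] unfolding per_def X_def by simp
    have hY: "herm (\<lambda>n. hilb_mult N n * X n)"
      using hilb_herm[OF NM M] herm_dft_real unfolding herm_def X_def by simp
    show ?thesis unfolding hilbert_def using dft_idft[OF pY hY N] unfolding X_def by simp
  qed
  show ?thesis
  proof (intro ballI)
    fix n assume "n \<in> {0..<int N div 2}"
    define A0 where "A0 = 1 + complex_of_real s * \<i> * comp_mult N n"
    define A1 where "A1 = 1 + complex_of_real s * \<i> * comp_mult N (n + int M)"
    have m0: "A0 * cnj A0 = 2 * (1 + complex_of_real s * \<i> * hilb_mult N n)"
      unfolding A0_def using mult_id[OF NM M assms(5), of n] by simp
    have m1: "A1 * cnj A1 = 2 * (1 + complex_of_real s * \<i> * hilb_mult N (n + int M))"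
      unfolding A1_def using mult_id[OF NM M assms(5), of "n + int M"] by simp
    have T00: "Mtq N r s n 0 0 = A0 * beta N r n" unfolding Mtq_eq A0_def psi_hat_def by simp
    have T01: "Mtq N r s n 0 1 = A1 * beta N r (n + int M)" unfolding Mtq_eq A1_def psi_hat_def by simp
    have T10: "Mtq N r s n 1 0 = A0 * alpha N r n" unfolding Mtq_eq A0_def psi_hat_def by simp
    have T11: "Mtq N r s n 1 1 = A1 * alpha N r (n + int M)" unfolding Mtq_eq A1_def psi_hat_def by simp
    note o1 = ortho[OF NM M, of r n] and o2 = ortho[OF NM M, of r "n + int M"]
    have o3: "beta N r (n + int M) * cnj (beta N r n) + alpha N r (n + int M) * cnj (alpha N r n) = 0"
    proof -
      have "cnj (beta N r n * cnj (beta N r (n + int M)) + alpha N r n * cnj (alpha N r (n + int M))) = 0"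
        using o1(2) by simp
      then show ?thesis by (simp add: mult.commute)
    qed
    have P1: "\<forall>\<mu>\<in>{0,1}. dft1 N (zcoef N r s x \<mu>) n = (1/2) * (\<Sum>j\<in>{0::nat,1}. cnj (Mtq N r s n \<mu> j) * dft N (\<lambda>k. complex_of_real (x k)) (n + int j * (int N div 2)))"
      using Zeq unfolding X_def hd by simp
    have Q0: "(\<Sum>j\<in>{0::nat,1}. Mq N r s n 0 j * dft1 N (zcoef N r s x j) n)
        = 2 * (X n + complex_of_real s * \<i> * (hilb_mult N n * X n))"
    proof -
      have "(\<Sum>j\<in>{0::nat,1}. Mq N r s n 0 j * dft1 N (zcoef N r s x j) n)
          = (A0 * beta N r n) * ((1/2)*(cnj (A0 * beta N r n) * X n + cnj (A1 * beta N r (n + int M)) * X (n + int M)))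
          + (A0 * alpha N r n) * ((1/2)*(cnj (A0 * alpha N r n) * X n + cnj (A1 * alpha N r (n + int M)) * X (n + int M)))"
        unfolding Mq_def Zeq by (simp add: T00 T01[unfolded One_nat_def] T10[unfolded One_nat_def] T11[unfolded One_nat_def])
      also have "\<dots> = 2 * ((1 + complex_of_real s * \<i> * hilb_mult N n) * X n)"
        by (rule alg[OF o1(1) o1(2) m0])
      finally show ?thesis by (simp add: algebra_simps)
    qed
    have Q1: "(\<Sum>j\<in>{0::nat,1}. Mq N r s n 1 j * dft1 N (zcoef N r s x j) n)
        = 2 * (X (n + int M) + complex_of_real s * \<i> * (hilb_mult N (n + int M) * X (n + int M)))"
    proof -
      have "(\<Sum>j\<in>{0::nat,1}. Mq N r s n 1 j * dft1 N (zcoef N r s x j) n)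
          = (A1 * beta N r (n + int M)) * ((1/2)*(cnj (A1 * beta N r (n + int M)) * X (n + int M) + cnj (A0 * beta N r n) * X n))
          + (A1 * alpha N r (n + int M)) * ((1/2)*(cnj (A1 * alpha N r (n + int M)) * X (n + int M) + cnj (A0 * alpha N r n) * X n))"
        unfolding Mq_def Zeq by (simp add: T00 T01[unfolded One_nat_def] T10[unfolded One_nat_def] T11[unfolded One_nat_def] add.commute)
      also have "\<dots> = 2 * ((1 + complex_of_real s * \<i> * hilb_mult N (n + int M)) * X (n + int M))"
        by (rule alg[OF o2(1) o3 m1])
      finally show ?thesis by (simp add: algebra_simps)
    qed
    show "let X = (\<lambda>j::nat. dft N (\<lambda>k. of_real (x k)) (n + int j * (int N div 2)));
          Hh = (\<lambda>j::nat. dft N (\<lambda>k. of_real (hilbert N x k)) (n + int j * (int N div 2)));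
          Z = (\<lambda>\<mu>. dft1 N (zcoef N r s x \<mu>) n)
      in (\<forall>\<mu>\<in>{0,1}. Z \<mu> = (1/2) * (\<Sum>j\<in>{0,1}. cnj (Mtq N r s n \<mu> j) * X j))
       \<and> (\<forall>\<mu>\<in>{0,1}. (\<Sum>j\<in>{0,1}. Mq N r s n \<mu> j * Z j)
                        = 2 * (X \<mu> + of_real s * \<i> * Hh \<mu>))"
      unfolding Let_def
    proof (intro conjI)
      show "\<forall>\<mu>\<in>{0,1}. dft1 N (zcoef N r s x \<mu>) n = (1/2) * (\<Sum>j\<in>{0::nat,1}. cnj (Mtq N r s n \<mu> j) * dft N (\<lambda>k. complex_of_real (x k)) (n + int j * (int N div 2)))"
        by (rule P1)
      show "\<forall>\<mu>\<in>{0,1}. (\<Sum>j\<in>{0::nat,1}. Mq N r s n \<mu> j * dft1 N (zcoef N r s x j) n)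
          = 2 * (dft N (\<lambda>k. complex_of_real (x k)) (n + int \<mu> * (int N div 2)) + complex_of_real s * \<i> * dft N (\<lambda>k. complex_of_real (hilbert N x k)) (n + int \<mu> * (int N div 2)))"
        using Q0 Q1 unfolding Hh hd X_def by simp
    qed
  qed
qed

end
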